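(* Let $\sigma^2>0$, let $\varphi:[0,\infty)\to\mathbb{R}$ be a Stieltjes function with $\varphi(0)=1$, and let $\psi:[0,\infty)\to(0,\infty)$ be strictly positive with a completely monotone derivative. Define $$C(\theta,u)=\frac{\sigma^2}{\psi(u^2)}\,\varphi\!\left(\frac{\theta}{\psi(u^2)}\right),\qquad \theta\in[0,\pi],\ u\in\mathbb{R}.$$ Then $C$ is a covariance function on $\mathbb{S}^d\times\mathbb{R}$ for every positive integer $d$.
   Context: A function $\varphi:[0,\infty)\to\mathbb{R}$ is a Stieltjes function if $\varphi(t)=\int_{[0,\infty)}\frac{\mu(d\xi)}{t+\xi}$ for $t\ge0$, where $\mu$ is a positive bounded measure; the requirement $\varphi(0)=1$ means $\int\xi^{-1}\mu(d\xi)=1$. A function $f$ on $(0,\infty)$ is completely monotone if it is infinitely differentiable with $(-1)^nf^{(n)}(t)\ge0$ for all $n\ge0$, $t>0$. $\mathbb{S}^d=\{\mathbf{s}\in\mathbb{R}^{d+1}:\|\mathbf{s}\|=1\}$ with great circle distance $\theta(\mathbf{s}_1,\mathbf{s}_2)=\arccos(\mathbf{s}_1^\top\mathbf{s}_2)$. $C:[0,\pi]\times\mathbb{R}\to\mathbb{R}$ is a covariance function on $\mathbb{S}^d\times\mathbb{R}$ if for every finite collection $(\mathbf{s}_k,t_k)\in\mathbb{S}^d\times\mathbb{R}$ and reals $a_k$, $\sum_{k,h}a_ka_hC(\theta(\mathbf{s}_k,\mathbf{s}_h),t_k-t_h)\ge0$. *)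

theory Defs
  imports "HOL-Analysis.Analysis"
begin

text \<open>Stieltjes function on [0,inf): phi t = integral of 1/(t+xi) w.r.t. a positive bounded
  Borel measure mu concentrated on [0,inf), for all t >= 0. Since phi 0 must be a real number,
  mu has no atom at 0; we state the support condition as mu((-inf,0]) = 0.\<close>
definition stieltjes_fun :: "(real \<Rightarrow> real) \<Rightarrow> bool" where
  "stieltjes_fun \<phi> \<longleftrightarrow>
     (\<exists>M :: real measure. sets M = sets borel \<and> finite_measure M \<and>
        emeasure M {..0} = 0 \<and>
        (\<forall>t\<ge>0. integrable M (\<lambda>\<xi>. 1 / (t + \<xi>)) \<and> \<phi> t = (\<integral>\<xi>. 1 / (t + \<xi>) \<partial>M)))"

definition completely_monotone :: "(real \<Rightarrow> real) \<Rightarrow> bool" where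
  "completely_monotone f \<longleftrightarrow>
     (\<forall>n::nat. \<forall>t>0. (deriv ^^ n) f differentiable (at t) \<and> (-1) ^ n * (deriv ^^ n) f t \<ge> 0)"

definition sphere_pts :: "nat \<Rightarrow> (nat \<Rightarrow> real) set" where
  "sphere_pts d = {x. (\<forall>i>d. x i = 0) \<and> (\<Sum>i\<le>d. (x i)\<^sup>2) = 1}"

definition gc_dist :: "nat \<Rightarrow> (nat \<Rightarrow> real) \<Rightarrow> (nat \<Rightarrow> real) \<Rightarrow> real" where
  "gc_dist d x y = arccos (\<Sum>i\<le>d. x i * y i)"

definition covariance_sphere_time :: "nat \<Rightarrow> (real \<Rightarrow> real \<Rightarrow> real) \<Rightarrow> bool" where
  "covariance_sphere_time d C \<longleftrightarrow>
     (\<forall>(n::nat) (s::nat \<Rightarrow> nat \<Rightarrow> real) (t::nat \<Rightarrow> real) (a::nat \<Rightarrow> real).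
        (\<forall>k<n. s k \<in> sphere_pts d) \<longrightarrow>
        (\<Sum>k<n. \<Sum>h<n. a k * a h * C (gc_dist d (s k) (s h)) (t k - t h)) \<ge> 0)"

end

theory Submission
  imports Defs
begin

definition gram :: "nat \<Rightarrow> (nat \<Rightarrow> nat \<Rightarrow> real) \<Rightarrow> bool" where
  "gram n M \<longleftrightarrow> (\<exists>vs. \<forall>k<n. \<forall>h<n. M k h = (\<Sum>v\<leftarrow>vs. v k * v h))"

definition apx :: "nat \<Rightarrow> (nat \<Rightarrow> nat \<Rightarrow> real) \<Rightarrow> bool" where
  "apx n M \<longleftrightarrow> (\<forall>e>0. \<exists>G. gram n G \<and> (\<forall>k<n. \<forall>h<n. \<bar>G k h - M k h\<bar> < e))"

lemma sum_list_cmult: "(\<Sum>x\<leftarrow>xs. c * f x) = c * (\<Sum>x\<leftarrow>xs. f x)"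
  for c :: real by (induction xs) (auto simp: algebra_simps)

lemma gram_zero: "gram n (\<lambda>k h. 0)"
  unfolding gram_def by (rule exI[of _ "[]"]) simp

lemma gram_rank1: "gram n (\<lambda>k h. f k * f h)"
  unfolding gram_def by (rule exI[of _ "[f]"]) simp

lemma gram_add: "gram n A \<Longrightarrow> gram n B \<Longrightarrow> gram n (\<lambda>k h. A k h + B k h)"
proof -
  assume "gram n A" "gram n B"
  then obtain vs ws where "\<forall>k<n. \<forall>h<n. A k h = (\<Sum>v\<leftarrow>vs. v k * v h)"
    and "\<forall>k<n. \<forall>h<n. B k h = (\<Sum>v\<leftarrow>ws. v k * v h)" unfolding gram_def by blast
  then have "\<forall>k<n. \<forall>h<n. A k h + B k h = (\<Sum>v\<leftarrow>vs@ws. v k * v h)" by simp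
  then show ?thesis unfolding gram_def by blast
qed

lemma gram_scale: assumes "c \<ge> 0" "gram n A" shows "gram n (\<lambda>k h. c * A k h)"
proof -
  from assms(2) obtain vs where vs: "\<forall>k<n. \<forall>h<n. A k h = (\<Sum>v\<leftarrow>vs. v k * v h)"
    unfolding gram_def by blast
  have "\<forall>k<n. \<forall>h<n. c * A k h = (\<Sum>v\<leftarrow>map (\<lambda>v k. sqrt c * v k) vs. v k * v h)"
  proof (intro allI impI)
    fix k h assume "k < n" "h < n"
    have "(\<Sum>v\<leftarrow>map (\<lambda>v k. sqrt c * v k) vs. v k * v h) = (\<Sum>v\<leftarrow>vs. c * (v k * v h))"
      using assms(1) by (simp add: o_def algebra_simps)
    also have "\<dots> = c * A k h" using vs \<open>k<n\<close> \<open>h<n\<close> by (simp add: sum_list_cmult)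
    finally show "c * A k h = (\<Sum>v\<leftarrow>map (\<lambda>v k. sqrt c * v k) vs. v k * v h)" by simp
  qed
  then show ?thesis unfolding gram_def by blast
qed

lemma sum_list_prod_concat:
  fixes g :: "'a \<Rightarrow> real" and f :: "'b \<Rightarrow> real"
  shows "(\<Sum>p\<leftarrow>concat (map (\<lambda>v. map (\<lambda>w. (v,w)) ws) vs). g (fst p) * f (snd p))
       = (\<Sum>v\<leftarrow>vs. g v) * (\<Sum>w\<leftarrow>ws. f w)"
proof (induction vs)
  case Nil then show ?case by simp
next
  case (Cons v vs)
  have "(\<Sum>p\<leftarrow>map (\<lambda>w. (v,w)) ws. g (fst p) * f (snd p)) = g v * (\<Sum>w\<leftarrow>ws. f w)"
    by (simp add: o_def sum_list_cmult)
  with Cons show ?case by (simp add: algebra_simps)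
qed

lemma gram_mult: assumes "gram n A" "gram n B" shows "gram n (\<lambda>k h. A k h * B k h)"
proof -
  from assms obtain vs ws where vs: "\<forall>k<n. \<forall>h<n. A k h = (\<Sum>v\<leftarrow>vs. v k * v h)"
    and ws: "\<forall>k<n. \<forall>h<n. B k h = (\<Sum>v\<leftarrow>ws. v k * v h)"
    unfolding gram_def by blast
  define us where "us = map (\<lambda>p k. fst p k * snd p k) (concat (map (\<lambda>v. map (\<lambda>w. (v,w)) ws) vs))"
  have "\<forall>k<n. \<forall>h<n. A k h * B k h = (\<Sum>u\<leftarrow>us. u k * u h)"
  proof (intro allI impI)
    fix k h assume "k < n" "h < n"
    have "(\<Sum>u\<leftarrow>us. u k * u h) = (\<Sum>p\<leftarrow>concat (map (\<lambda>v. map (\<lambda>w. (v,w)) ws) vs).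
            (fst p k * fst p h) * (snd p k * snd p h))"
      unfolding us_def by (simp add: o_def algebra_simps)
    also have "\<dots> = (\<Sum>v\<leftarrow>vs. v k * v h) * (\<Sum>w\<leftarrow>ws. w k * w h)"
      by (rule sum_list_prod_concat)
    finally show "A k h * B k h = (\<Sum>u\<leftarrow>us. u k * u h)" using vs ws \<open>k<n\<close> \<open>h<n\<close> by simp
  qed
  then show ?thesis unfolding gram_def by blast
qed

lemma gram_psd: assumes "gram n M" shows "(\<Sum>k<n. \<Sum>h<n. a k * a h * M k h) \<ge> 0"
proof -
  from assms obtain vs where vs: "\<forall>k<n. \<forall>h<n. M k h = (\<Sum>v\<leftarrow>vs. v k * v h)"
    unfolding gram_def by blast
  have "(\<Sum>k<n. \<Sum>h<n. a k * a h * (\<Sum>v\<leftarrow>vs. v k * v h)) = (\<Sum>v\<leftarrow>vs. (\<Sum>k<n. a k * v k)^2)"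
  proof (induction vs)
    case Nil then show ?case by simp
  next
    case (Cons v vs)
    have "(\<Sum>k<n. \<Sum>h<n. a k * a h * (\<Sum>w\<leftarrow>v#vs. w k * w h))
       = (\<Sum>k<n. \<Sum>h<n. (a k * v k) * (a h * v h) + a k * a h * (\<Sum>w\<leftarrow>vs. w k * w h))"
      by (intro sum.cong refl) (simp add: ring_distribs)
    also have "\<dots> = (\<Sum>k<n. \<Sum>h<n. (a k * v k) * (a h * v h)) + (\<Sum>k<n. \<Sum>h<n. a k * a h * (\<Sum>w\<leftarrow>vs. w k * w h))"
      by (simp only: sum.distrib)
    also have "(\<Sum>k<n. \<Sum>h<n. (a k * v k) * (a h * v h)) = (\<Sum>k<n. a k * v k)^2"
      by (simp only: power2_eq_square sum_product)
    finally show ?case using Cons by simp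
  qed
  moreover have "(\<Sum>v\<leftarrow>vs. (\<Sum>k<n. a k * v k)^2) \<ge> 0" by (induction vs) auto
  moreover have "(\<Sum>k<n. \<Sum>h<n. a k * a h * M k h) = (\<Sum>k<n. \<Sum>h<n. a k * a h * (\<Sum>v\<leftarrow>vs. v k * v h))"
    using vs by (intro sum.cong refl) auto
  ultimately show ?thesis by simp
qed


lemma apx_gram: "gram n G \<Longrightarrow> apx n G"
  unfolding apx_def by (intro allI impI exI[of _ G]) auto

lemma eventually_all_kh:
  fixes n :: nat
  assumes "\<And>k h. k < n \<Longrightarrow> h < n \<Longrightarrow> eventually (P k h) F"
  shows "eventually (\<lambda>x. \<forall>k<n. \<forall>h<n. P k h x) F"
proof -
  have "eventually (\<lambda>x. \<forall>k\<in>{..<n}. \<forall>h\<in>{..<n}. P k h x) F"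
    using assms by (intro eventually_ball_finite ballI) auto
  then show ?thesis by (rule eventually_mono) auto
qed

lemma apx_lim:
  assumes F: "F \<noteq> bot" and ev: "eventually (\<lambda>x. apx n (M x)) F"
    and lim: "\<And>k h. k < n \<Longrightarrow> h < n \<Longrightarrow> ((\<lambda>x. M x k h) \<longlongrightarrow> L k h) F"
  shows "apx n L"
  unfolding apx_def
proof (intro allI impI)
  fix e :: real assume e: "e > 0"
  have "eventually (\<lambda>x. \<forall>k<n. \<forall>h<n. dist (M x k h) (L k h) < e/2) F"
    using lim e by (intro eventually_all_kh tendstoD) auto
  with ev have "eventually (\<lambda>x. apx n (M x) \<and> (\<forall>k<n. \<forall>h<n. dist (M x k h) (L k h) < e/2)) F"
    by (rule eventually_conj)
  then obtain x where x: "apx n (M x)" "\<forall>k<n. \<forall>h<n. dist (M x k h) (L k h) < e/2"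
    using eventually_happens'[OF F] by blast
  from x(1) e obtain G where G: "gram n G" "\<forall>k<n. \<forall>h<n. \<bar>G k h - M x k h\<bar> < e/2"
    unfolding apx_def by (meson half_gt_zero)
  have "\<forall>k<n. \<forall>h<n. \<bar>G k h - L k h\<bar> < e"
  proof (intro allI impI)
    fix k h assume "k < n" "h < n"
    then have "\<bar>G k h - M x k h\<bar> < e/2" "\<bar>M x k h - L k h\<bar> < e/2"
      using G x by (auto simp: dist_real_def)
    then show "\<bar>G k h - L k h\<bar> < e" by linarith
  qed
  with G(1) show "\<exists>G. gram n G \<and> (\<forall>k<n. \<forall>h<n. \<bar>G k h - L k h\<bar> < e)" by blast
qed

lemma apx_seq:
  assumes "apx n M"
  obtains G where "\<And>j. gram n (G j)" "\<And>k h. k < n \<Longrightarrow> h < n \<Longrightarrow> (\<lambda>j. G j k h) \<longlonglongrightarrow> M k h"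
proof -
  have "\<forall>j. \<exists>G. gram n G \<and> (\<forall>k<n. \<forall>h<n. \<bar>G k h - M k h\<bar> < 1 / Suc j)"
    using assms unfolding apx_def by simp
  then obtain G where G: "\<And>j. gram n (G j)" "\<And>j. \<forall>k<n. \<forall>h<n. \<bar>G j k h - M k h\<bar> < 1 / Suc j"
    by metis
  have "(\<lambda>j. G j k h) \<longlonglongrightarrow> M k h" if "k < n" "h < n" for k h
  proof -
    have "(\<lambda>j. G j k h - M k h) \<longlonglongrightarrow> 0"
    proof (rule Lim_null_comparison[OF _ LIMSEQ_inverse_real_of_nat])
      show "\<forall>\<^sub>F j in sequentially. norm (G j k h - M k h) \<le> inverse (real (Suc j))"
        using G(2) that by (auto intro!: always_eventually less_imp_le simp: field_simps)
    qed
    then show ?thesis by (simp add: LIM_zero_iff)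
  qed
  then show ?thesis using that G(1) by blast
qed

lemma apx_binop:
  assumes "apx n A" "apx n B"
    and gop: "\<And>X Y. gram n X \<Longrightarrow> gram n Y \<Longrightarrow> gram n (\<lambda>k h. f (X k h) (Y k h))"
    and cont: "\<And>x y. isCont (\<lambda>p. f (fst p) (snd p)) (x, y)"
  shows "apx n (\<lambda>k h. f (A k h) (B k h))"
proof -
  obtain G where G: "\<And>j. gram n (G j)" "\<And>k h. k < n \<Longrightarrow> h < n \<Longrightarrow> (\<lambda>j. G j k h) \<longlonglongrightarrow> A k h"
    using apx_seq[OF assms(1)] by blast
  obtain H where H: "\<And>j. gram n (H j)" "\<And>k h. k < n \<Longrightarrow> h < n \<Longrightarrow> (\<lambda>j. H j k h) \<longlonglongrightarrow> B k h"
    using apx_seq[OF assms(2)] by blast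
  show ?thesis
  proof (rule apx_lim[of sequentially n "\<lambda>j k h. f (G j k h) (H j k h)"])
    show "\<forall>\<^sub>F j in sequentially. apx n (\<lambda>k h. f (G j k h) (H j k h))"
      using G(1) H(1) gop apx_gram by (intro always_eventually) blast
    fix k h assume kh: "k < n" "h < n"
    have "((\<lambda>j. (G j k h, H j k h)) \<longlongrightarrow> (A k h, B k h)) sequentially"
      using G(2)[OF kh] H(2)[OF kh] by (rule tendsto_Pair)
    from isCont_tendsto_compose[OF cont this]
    show "(\<lambda>j. f (G j k h) (H j k h)) \<longlonglongrightarrow> f (A k h) (B k h)" by simp
  qed simp
qed

lemma apx_add: "apx n A \<Longrightarrow> apx n B \<Longrightarrow> apx n (\<lambda>k h. A k h + B k h)"
  by (rule apx_binop[where f="(+)"]) (auto intro: gram_add continuous_intros)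

lemma apx_mult: "apx n A \<Longrightarrow> apx n B \<Longrightarrow> apx n (\<lambda>k h. A k h * B k h)"
  by (rule apx_binop[where f="(*)"]) (auto intro: gram_mult continuous_intros)

lemma apx_rank1: "apx n (\<lambda>k h. f k * f h)"
  by (rule apx_gram[OF gram_rank1])

lemma apx_one: "apx n (\<lambda>k h. 1)"
  using apx_rank1[of n "\<lambda>k. 1"] by simp

lemma apx_zero: "apx n (\<lambda>k h. 0)"
  by (rule apx_gram[OF gram_zero])

lemma apx_scale: assumes "c \<ge> 0" "apx n A" shows "apx n (\<lambda>k h. c * A k h)"
proof -
  have "apx n (\<lambda>k h. sqrt c * sqrt c)" using apx_rank1[of n "\<lambda>k. sqrt c"] by simp
  then have "apx n (\<lambda>k h. c)" using assms(1) by simp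
  from apx_mult[OF this assms(2)] show ?thesis .
qed

lemma apx_sum: assumes "finite S" "\<And>i. i \<in> S \<Longrightarrow> apx n (A i)"
  shows "apx n (\<lambda>k h. \<Sum>i\<in>S. A i k h)"
  using assms by (induction S rule: finite_induct) (auto intro: apx_zero apx_add)

lemma apx_suminf:
  assumes "\<And>i. apx n (A i)" "\<And>k h. k < n \<Longrightarrow> h < n \<Longrightarrow> summable (\<lambda>i. A i k h)"
  shows "apx n (\<lambda>k h. \<Sum>i. A i k h)"
proof (rule apx_lim[of sequentially n "\<lambda>m k h. \<Sum>i<m. A i k h"])
  show "\<forall>\<^sub>F m in sequentially. apx n (\<lambda>k h. \<Sum>i<m. A i k h)"
    using assms(1) by (intro always_eventually allI apx_sum) auto
  fix k h assume "k < n" "h < n"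
  then show "(\<lambda>m. \<Sum>i<m. A i k h) \<longlonglongrightarrow> (\<Sum>i. A i k h)"
    using assms(2) summable_LIMSEQ by blast
qed simp

lemma apx_pow: "apx n A \<Longrightarrow> apx n (\<lambda>k h. A k h ^ m)"
  by (induction m) (auto intro: apx_one apx_mult)

lemma apx_exp: assumes "apx n A" shows "apx n (\<lambda>k h. exp (A k h))"
proof -
  have "apx n (\<lambda>k h. \<Sum>m. inverse (fact m) * A k h ^ m)"
    using assms summable_exp
    by (intro apx_suminf apx_scale apx_pow) (auto simp: divide_inverse mult.commute)
  moreover have "\<And>x::real. (\<Sum>m. inverse (fact m) * x ^ m) = exp x"
    by (simp add: exp_def divide_inverse mult.commute)
  ultimately show ?thesis by simp
qed

lemma apx_psd: assumes "apx n M" shows "(\<Sum>k<n. \<Sum>h<n. a k * a h * M k h) \<ge> 0"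
proof -
  obtain G where G: "\<And>j. gram n (G j)" "\<And>k h. k < n \<Longrightarrow> h < n \<Longrightarrow> (\<lambda>j. G j k h) \<longlonglongrightarrow> M k h"
    using apx_seq[OF assms] by blast
  have "(\<lambda>j. \<Sum>k<n. \<Sum>h<n. a k * a h * G j k h) \<longlonglongrightarrow> (\<Sum>k<n. \<Sum>h<n. a k * a h * M k h)"
    using G(2) by (intro tendsto_sum tendsto_mult tendsto_const) auto
  moreover have "\<forall>j. (\<Sum>k<n. \<Sum>h<n. a k * a h * G j k h) \<ge> 0" using G(1) gram_psd by blast
  ultimately show ?thesis by (intro LIMSEQ_le_const[of _ _ 0]) auto
qed


definition gam :: "nat \<Rightarrow> real" where "gam j = ((-1/2) gchoose j) * (-1)^j"

definition asc :: "nat \<Rightarrow> real" where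
  "asc n = (if even n then gam (n div 2) / real (Suc n) else 0)"

lemma gam_nonneg: "gam j \<ge> 0"
proof -
  have "gam j = pochhammer (1/2) j / fact j"
    unfolding gam_def gbinomial_pochhammer by (simp add: power_mult_distrib[symmetric])
  then show ?thesis by (simp add: pochhammer_nonneg)
qed

lemma asc_nonneg: "asc n \<ge> 0"
  unfolding asc_def using gam_nonneg by simp

lemma binom_sums:
  fixes x :: real assumes "\<bar>x\<bar> < 1"
  shows "(\<lambda>j. gam j * (x^2)^j) sums inverse (sqrt (1 - x^2))"
proof -
  have "\<bar>-(x^2)\<bar> < 1" using assms by (simp add: abs_square_less_1)
  from gen_binomial_real[OF this, of "-1/2"]
  have "(\<lambda>j. ((-1/2) gchoose j) * (-(x^2))^j) sums (1 + - (x^2)) powr (-1/2)" .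
  moreover have "(\<lambda>j. ((-1/2) gchoose j) * (-(x^2))^j) = (\<lambda>j. gam j * (x^2)^j)"
    by (rule ext) (simp only: gam_def power_minus[of "x^2"] mult_ac)
  moreover have "(1 + - (x^2)) powr (-1/2) = inverse (sqrt (1 - x^2))"
  proof -
    have "(1 - x^2) powr (-1/2) = inverse ((1 - x^2) powr (1/2))"
      using powr_minus[of "1 - x^2" "1/2"] by simp
    also have "\<dots> = inverse (sqrt (1 - x^2))"
      using assms by (subst powr_half_sqrt) (auto simp: abs_square_less_1 less_imp_le)
    finally show ?thesis by simp
  qed
  ultimately show ?thesis by simp
qed

lemma deriv_terms_sums:
  fixes x :: real assumes "\<bar>x\<bar> < 1"
  shows "(\<lambda>n. asc n * real (Suc n) * x^n) sums inverse (sqrt (1 - x^2))"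
proof -
  have "(\<lambda>n. if even n then gam (n div 2) * (x^2)^(n div 2) else (\<lambda>_. 0) ((n - 1) div 2))
         sums (0 + inverse (sqrt (1 - x^2)))"
    by (rule sums_if[OF sums_zero binom_sums[OF assms]])
  moreover have "(\<lambda>n. if even n then gam (n div 2) * (x^2)^(n div 2) else (\<lambda>_. 0) ((n - 1) div 2))
     = (\<lambda>n. asc n * real (Suc n) * x^n)"
  proof
    fix n :: nat
    show "(if even n then gam (n div 2) * (x^2)^(n div 2) else (\<lambda>_. 0) ((n - 1) div 2))
       = asc n * real (Suc n) * x^n"
    proof (cases "even n")
      case True
      then have "x^n = x^(2*(n div 2))" by simp
      then have "x^n = (x^2)^(n div 2)" by (simp only: power_mult)
      then show ?thesis using True by (simp add: asc_def)
    qed (simp add: asc_def)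
  qed
  ultimately show ?thesis by simp
qed

lemma arcsin_sums:
  fixes x :: real assumes x: "\<bar>x\<bar> < 1"
  shows "(\<lambda>n. asc n * x^Suc n) sums arcsin x"
proof -
  have summ: "summable (\<lambda>n. asc n * y^Suc n)" if "\<bar>y\<bar> < 1" for y :: real
  proof (rule summable_comparison_test[OF _ sums_summable[OF deriv_terms_sums[of "\<bar>y\<bar>"]]])
    show "\<exists>N. \<forall>n\<ge>N. norm (asc n * y ^ Suc n) \<le> asc n * real (Suc n) * \<bar>y\<bar> ^ n"
    proof (intro exI allI impI)
      fix n :: nat
      have "\<bar>y\<bar>^Suc n \<le> \<bar>y\<bar>^n" using that by (simp add: mult_left_le_one_le)
      also have "\<dots> \<le> real (Suc n) * \<bar>y\<bar>^n" by (simp add: distrib_right)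
      finally show "norm (asc n * y ^ Suc n) \<le> asc n * real (Suc n) * \<bar>y\<bar> ^ n"
        using asc_nonneg[of n] by (simp add: abs_mult power_abs mult_left_mono mult.assoc)
    qed
  qed (use that in simp)
  define h where "h y = (\<Sum>n. asc n * y^Suc n) - arcsin y" for y :: real
  have "DERIV h y :> 0" if "y \<in> {-1<..<1}" for y
  proof -
    have "DERIV (\<lambda>y. \<Sum>n. asc n * y^Suc n) y :> (\<Sum>n. asc n * real (Suc n) * y^n)"
      by (rule DERIV_power_series'[where R=1])
         (use that deriv_terms_sums sums_summable in \<open>auto simp: abs_less_iff\<close>)
    moreover have "(\<Sum>n. asc n * real (Suc n) * y^n) = inverse (sqrt (1 - y^2))"
      using deriv_terms_sums[of y] that by (simp add: sums_iff abs_less_iff)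
    moreover have "DERIV arcsin y :> inverse (sqrt (1 - y^2))"
      using that by (intro DERIV_arcsin) auto
    ultimately have "DERIV h y :> inverse (sqrt (1 - y^2)) - inverse (sqrt (1 - y^2))"
      unfolding h_def by (intro DERIV_diff) auto
    then show ?thesis by simp
  qed
  then have "h x = h 0" by (intro DERIV_isconst3[of "-1" 1]) (use x in \<open>auto simp: abs_less_iff\<close>)
  then have "(\<Sum>n. asc n * x^Suc n) = arcsin x" by (simp add: h_def)
  with summ[OF x] show ?thesis by (simp add: sums_iff)
qed


definition inner_d :: "nat \<Rightarrow> (nat \<Rightarrow> real) \<Rightarrow> (nat \<Rightarrow> real) \<Rightarrow> real" where
  "inner_d d x y = (\<Sum>i\<le>d. x i * y i)"

lemma gram_inner: "gram n (\<lambda>k h. inner_d d (s k) (s h))"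
  unfolding gram_def
proof (intro exI allI impI)
  fix k h
  have "(\<Sum>v\<leftarrow>map (\<lambda>i k. s k i) [0..<Suc d]. v k * v h) = (\<Sum>i\<leftarrow>[0..<Suc d]. s k i * s h i)"
    by (simp add: o_def)
  also have "\<dots> = (\<Sum>i\<in>{0..<Suc d}. s k i * s h i)"
    by (simp add: interv_sum_list_conv_sum_set_nat)
  also have "{0..<Suc d} = {..d}" by auto
  finally show "inner_d d (s k) (s h) = (\<Sum>v\<leftarrow>map (\<lambda>i k. s k i) [0..<Suc d]. v k * v h)"
    by (simp add: inner_d_def)
qed

lemma inner_d_bound:
  assumes "x \<in> sphere_pts d" "y \<in> sphere_pts d"
  shows "\<bar>inner_d d x y\<bar> \<le> 1"
proof -
  have "\<bar>inner_d d x y\<bar> \<le> (\<Sum>i\<le>d. \<bar>x i * y i\<bar>)"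
    unfolding inner_d_def by (rule sum_abs)
  also have "\<dots> \<le> (\<Sum>i\<le>d. ((x i)^2 + (y i)^2) / 2)"
  proof (rule sum_mono)
    fix i
    have "0 \<le> (\<bar>x i\<bar> - \<bar>y i\<bar>)^2" by simp
    then show "\<bar>x i * y i\<bar> \<le> ((x i)^2 + (y i)^2) / 2"
      by (simp add: power2_eq_square abs_mult algebra_simps)
  qed
  also have "\<dots> = ((\<Sum>i\<le>d. (x i)^2) + (\<Sum>i\<le>d. (y i)^2)) / 2"
    by (simp only: sum_divide_distrib[symmetric] sum.distrib)
  also have "\<dots> = 1" using assms by (simp add: sphere_pts_def)
  finally show ?thesis .
qed

lemma apx_cong: assumes "apx n A" "\<And>k h. k < n \<Longrightarrow> h < n \<Longrightarrow> A k h = B k h"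
  shows "apx n B"
  using assms unfolding apx_def by (metis (no_types, lifting))

lemma apx_arcsin_rho:
  assumes G: "gram n G" and bd: "\<And>k h. k < n \<Longrightarrow> h < n \<Longrightarrow> \<bar>G k h\<bar> \<le> 1"
    and rho: "0 \<le> \<rho>" "\<rho> < 1"
  shows "apx n (\<lambda>k h. arcsin (\<rho> * G k h))"
proof -
  have lt: "\<bar>\<rho> * G k h\<bar> < 1" if "k < n" "h < n" for k h
  proof -
    have "\<bar>\<rho> * G k h\<bar> = \<rho> * \<bar>G k h\<bar>" using rho by (simp add: abs_mult)
    also have "\<dots> \<le> \<rho>" using bd[OF that] rho by (simp add: mult_left_le)
    finally show ?thesis using rho by simp
  qed
  have "apx n (\<lambda>k h. \<Sum>m. asc m * (\<rho> * G k h) ^ Suc m)"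
  proof (rule apx_suminf)
    fix m
    show "apx n (\<lambda>k h. asc m * (\<rho> * G k h) ^ Suc m)"
      using asc_nonneg rho G by (intro apx_scale apx_pow apx_gram) auto
  next
    fix k h assume "k < n" "h < n"
    then show "summable (\<lambda>m. asc m * (\<rho> * G k h) ^ Suc m)"
      using arcsin_sums[OF lt] sums_summable by blast
  qed
  moreover have "k < n \<Longrightarrow> h < n \<Longrightarrow> (\<Sum>m. asc m * (\<rho> * G k h) ^ Suc m) = arcsin (\<rho> * G k h)" for k h
    using arcsin_sums[OF lt] by (simp add: sums_iff)
  ultimately show ?thesis
    by (rule apx_cong) auto
qed

lemma apx_exp_arccos:
  assumes G: "gram n G" and bd: "\<And>k h. k < n \<Longrightarrow> h < n \<Longrightarrow> \<bar>G k h\<bar> \<le> 1"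
    and c: "0 \<le> c"
  shows "apx n (\<lambda>k h. exp (- c * arccos (G k h)))"
proof -
  have "apx n (\<lambda>k h. exp (c * arcsin (G k h)))"
  proof (rule apx_lim[of "at_left (1::real)" n "\<lambda>\<rho> k h. exp (c * arcsin (\<rho> * G k h))"])
    show "at_left (1::real) \<noteq> bot" by simp
    have ev: "eventually (\<lambda>\<rho>::real. \<rho> \<in> {0<..<1}) (at_left 1)"
      by (rule eventually_at_left_real) simp
    then show "eventually (\<lambda>\<rho>. apx n (\<lambda>k h. exp (c * arcsin (\<rho> * G k h)))) (at_left 1)"
    proof (rule eventually_mono)
      fix \<rho> :: real assume "\<rho> \<in> {0<..<1}"
      then show "apx n (\<lambda>k h. exp (c * arcsin (\<rho> * G k h)))"
        using apx_arcsin_rho[OF G bd, of \<rho>] c by (intro apx_exp apx_scale) auto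
    qed
    fix k h assume kh: "k < n" "h < n"
    have "((\<lambda>\<rho>. arcsin (\<rho> * G k h)) \<longlongrightarrow> arcsin (1 * G k h)) (at_left 1)"
    proof (rule continuous_on_tendsto_compose[OF continuous_on_arcsin'])
      show "((\<lambda>\<rho>. \<rho> * G k h) \<longlongrightarrow> 1 * G k h) (at_left 1)"
        by (intro tendsto_intros)
      show "1 * G k h \<in> {-1..1}" using bd[OF kh] by auto
      show "\<forall>\<^sub>F \<rho> in at_left 1. \<rho> * G k h \<in> {-1..1}"
        using ev
      proof (rule eventually_mono)
        fix \<rho> :: real assume r: "\<rho> \<in> {0<..<1}"
        have "\<bar>\<rho> * G k h\<bar> = \<rho> * \<bar>G k h\<bar>" using r by (simp add: abs_mult)
        also have "\<dots> \<le> 1" using r bd[OF kh] by (simp add: mult_le_one)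
        finally show "\<rho> * G k h \<in> {-1..1}" by (auto simp: abs_le_iff)
      qed
    qed
    then show "((\<lambda>\<rho>. exp (c * arcsin (\<rho> * G k h))) \<longlongrightarrow> exp (c * arcsin (G k h))) (at_left 1)"
      by (auto intro!: tendsto_intros)
  qed
  then have "apx n (\<lambda>k h. exp (- c * (pi/2)) * exp (c * arcsin (G k h)))"
    by (rule apx_scale[rotated]) simp
  then show ?thesis
  proof (rule apx_cong)
    fix k h assume "k < n" "h < n"
    then have "arccos (G k h) = pi/2 - arcsin (G k h)" using bd by (intro arccos_arcsin_eq) (auto simp: abs_le_iff)
    then have "- c * arccos (G k h) = - c * (pi/2) + c * arcsin (G k h)"
      by (simp add: right_diff_distrib)
    then show "exp (- c * (pi/2)) * exp (c * arcsin (G k h)) = exp (- c * arccos (G k h))"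
      by (simp add: exp_add[symmetric])
  qed
qed

lemma apx_sphere:
  assumes "\<forall>k<n. s k \<in> sphere_pts d" "0 \<le> c"
  shows "apx n (\<lambda>k h. exp (- c * gc_dist d (s k) (s h)))"
  using apx_exp_arccos[OF gram_inner[of n d s] _ assms(2)] inner_d_bound assms(1)
  by (simp add: gc_dist_def inner_d_def)


lemma apx_gauss: assumes "0 \<le> lam"
  shows "apx n (\<lambda>k h. exp (- lam * (t k - t h)^2))"
proof -
  have "apx n (\<lambda>k h. sqrt (2*lam) * t k * (sqrt (2*lam) * t h))"
    using apx_rank1[of n "\<lambda>k. sqrt (2*lam) * t k"] by simp
  then have "apx n (\<lambda>k h. exp (sqrt (2*lam) * t k * (sqrt (2*lam) * t h)))" by (rule apx_exp)
  from apx_mult[OF apx_rank1[of n "\<lambda>k. exp (- lam * (t k)^2)"] this]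
  show ?thesis
  proof (rule apx_cong)
    fix k h
    have "sqrt (2*lam) * t k * (sqrt (2*lam) * t h) = 2 * lam * t k * t h"
      using assms by (simp add: algebra_simps)
    then have "- lam * (t k)^2 + (- lam * (t h)^2) + sqrt (2*lam) * t k * (sqrt (2*lam) * t h)
       = - lam * (t k - t h)^2" by (simp add: power2_eq_square algebra_simps)
    then show "exp (- lam * (t k)^2) * exp (- lam * (t h)^2) * exp (sqrt (2*lam) * t k * (sqrt (2*lam) * t h))
       = exp (- lam * (t k - t h)^2)"
      by (simp add: exp_add[symmetric])
  qed
qed

definition tayl :: "(nat \<Rightarrow> real \<Rightarrow> real) \<Rightarrow> nat \<Rightarrow> real \<Rightarrow> real \<Rightarrow> real" where
  "tayl D N x t = (\<Sum>m<N. D m t * (x - t)^m / fact m)"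

lemma tayl_deriv:
  assumes der: "\<And>m. (D m has_real_derivative D (Suc m) t) (at t)"
  shows "((\<lambda>t. tayl D (Suc N) x t) has_real_derivative D (Suc N) t * (x - t)^N / fact N) (at t)"
proof (induction N)
  case 0
  then show ?case using der[of 0] by (simp add: tayl_def)
next
  case (Suc N)
  have eq: "(\<lambda>t. tayl D (Suc (Suc N)) x t) = (\<lambda>t. tayl D (Suc N) x t + D (Suc N) t * (x - t)^Suc N / fact (Suc N))"
    by (simp add: tayl_def)
  have dxt: "((\<lambda>t. x - t) has_real_derivative (0 - 1)) (at t)"
    by (intro DERIV_diff DERIV_const DERIV_ident)
  have dp: "((\<lambda>t. (x - t)^Suc N) has_real_derivative (1 + of_nat N) * ((0 - 1) * (x - t)^N)) (at t)"
    by (rule DERIV_power_Suc[OF dxt])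
  have d2: "((\<lambda>t. D (Suc N) t * (x - t)^Suc N / fact (Suc N)) has_real_derivative
      (D (Suc (Suc N)) t * (x - t)^Suc N + (1 + of_nat N) * ((0 - 1) * (x - t)^N) * D (Suc N) t) / fact (Suc N)) (at t)"
    by (intro DERIV_cdivide DERIV_mult der dp)
  have "((\<lambda>t. tayl D (Suc (Suc N)) x t) has_real_derivative
      D (Suc N) t * (x - t)^N / fact N +
      (D (Suc (Suc N)) t * (x - t)^Suc N + (1 + of_nat N) * ((0 - 1) * (x - t)^N) * D (Suc N) t) / fact (Suc N)) (at t)"
    unfolding eq by (intro DERIV_add Suc d2)
  moreover have "D (Suc N) t * (x - t)^N / fact N +
      (D (Suc (Suc N)) t * (x - t)^Suc N + (1 + of_nat N) * ((0 - 1) * (x - t)^N) * D (Suc N) t) / fact (Suc N)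
      = D (Suc (Suc N)) t * (x - t)^Suc N / fact (Suc N)"
  proof -
    have gen: "\<And>s r q c F::real. F \<noteq> 0 \<Longrightarrow> c \<noteq> 0 \<Longrightarrow>
        s * r / F + (q + c * ((0 - 1) * r) * s) / (c * F) = q / (c * F)"
      by (simp add: field_simps)
    have fs: "(fact (Suc N) :: real) = (1 + of_nat N) * fact N" by simp
    have c: "(1 + of_nat N :: real) \<noteq> 0" by (metis add_pos_nonneg of_nat_0_le_iff zero_less_one less_irrefl)
    show ?thesis unfolding fs by (rule gen[OF _ c]) simp
  qed
  ultimately show ?case by simp
qed

lemma neg_pow: "((z::real) - t)^N = (-1)^N * (t - z)^N"
  using power_minus[of "t - z" N] by simp

lemma bern_little:
  fixes D :: "nat \<Rightarrow> real \<Rightarrow> real"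
  assumes der: "\<And>m t. t > 0 \<Longrightarrow> (D m has_real_derivative D (Suc m) t) (at t)"
    and sgn: "\<And>m t. m \<ge> 1 \<Longrightarrow> t > 0 \<Longrightarrow> (-1)^m * D m t \<ge> 0"
    and x: "0 < x" "x < b"
  shows "(\<lambda>m. D m b * (x - b)^m / fact m) sums D 0 x"
proof -
  define y where "y = x / 2"
  have y: "0 < y" "y < x" using x by (auto simp: y_def)
  define q where "q = (b - x) / (b - y)"
  have q: "0 \<le> q" "q < 1" using x y by (auto simp: q_def)
  have tdx: "((\<lambda>t. tayl D (Suc N) z t) has_real_derivative D (Suc N) t * (z - t)^N / fact N) (at t)"
    if "t > 0" for N z t
    using der[OF that] by (rule tayl_deriv)
  have at_self: "tayl D (Suc N) z z = D 0 z" for N z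
    by (simp add: tayl_def sum.lessThan_Suc_shift)
  have sg: "(-1)^N * D (Suc N) t \<le> 0" if "t > 0" for N t
    using sgn[of "Suc N" t] that by simp
  have dsign: "D (Suc N) t * (z - t)^N / fact N \<le> 0" if "z \<le> t" "t > 0" for z t N
  proof -
    have "D (Suc N) t * (z - t)^N / fact N = ((-1)^N * D (Suc N) t) * (t - z)^N / fact N"
      by (simp add: neg_pow[of z t])
    also have "\<dots> \<le> 0"
      using sg[OF that(2), of N] that(1) by (intro divide_nonpos_pos[OF mult_nonpos_nonneg]) auto
    finally show ?thesis .
  qed
  have mono: "tayl D (Suc N) z w \<le> tayl D (Suc N) z z" if "0 < z" "z \<le> w" for z w N
    using that(2)
  proof (rule DERIV_nonpos_imp_nonincreasing)
    fix t assume "z \<le> t" "t \<le> w"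
    then show "\<exists>y. ((\<lambda>t. tayl D (Suc N) z t) has_real_derivative y) (at t) \<and> y \<le> 0"
      using that tdx dsign by (meson less_le_trans)
  qed
  define R where "R N = D 0 x - tayl D (Suc N) x b" for N
  have R_nonneg: "0 \<le> R N" for N
    using mono[of x b N] x at_self by (simp add: R_def)
  have R_le: "R N \<le> q^N * (D 0 y - D 0 b)" for N
  proof -
    define E where "E t = q^N * tayl D (Suc N) y t - tayl D (Suc N) x t" for t
    have "E b \<le> E x"
      using x(2)[THEN less_imp_le]
    proof (rule DERIV_nonpos_imp_nonincreasing)
      fix t assume t: "x \<le> t" "t \<le> b"
      then have t0: "t > 0" using x by simp
      have "(E has_real_derivative q^N * (D (Suc N) t * (y - t)^N / fact N) - D (Suc N) t * (x - t)^N / fact N) (at t)"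
        unfolding E_def[abs_def] using tdx[OF t0] by (intro DERIV_diff DERIV_cmult) auto
      moreover have "q^N * (D (Suc N) t * (y - t)^N / fact N) - D (Suc N) t * (x - t)^N / fact N \<le> 0"
      proof -
        have "q^N * (D (Suc N) t * (y - t)^N / fact N) - D (Suc N) t * (x - t)^N / fact N
            = ((-1)^N * D (Suc N) t) * (q^N * (t - y)^N - (t - x)^N) / fact N"
          by (simp add: neg_pow[of y t] neg_pow[of x t] algebra_simps diff_divide_distrib)
        also have "\<dots> \<le> 0"
        proof (rule divide_nonpos_pos[OF mult_nonpos_nonneg])
          show "(-1)^N * D (Suc N) t \<le> 0" using sg[OF t0] .
          have "(b - x) * (t - y) - (t - x) * (b - y) = (x - y) * (b - t)" by (simp add: algebra_simps)
          moreover have "(x - y) * (b - t) \<ge> 0" using t y by simp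
          ultimately have "(t - x) * (b - y) \<le> (b - x) * (t - y)" by simp
          then have "t - x \<le> q * (t - y)" using x y by (simp add: q_def field_simps)
          then have "(t - x)^N \<le> (q * (t - y))^N" using t by (intro power_mono) auto
          then show "0 \<le> q^N * (t - y)^N - (t - x)^N" by (simp add: power_mult_distrib)
        qed simp
        finally show ?thesis .
      qed
      ultimately show "\<exists>d. (E has_real_derivative d) (at t) \<and> d \<le> 0" by blast
    qed
    then have "R N \<le> q^N * (tayl D (Suc N) y x - tayl D (Suc N) y b)"
      by (simp add: E_def R_def at_self algebra_simps)
    also have "\<dots> \<le> q^N * (D 0 y - D 0 b)"
    proof (rule mult_left_mono)
      have "tayl D (Suc N) y x \<le> D 0 y" using mono[of y x N] y at_self by simp
      moreover have "tayl D (Suc N) y b \<ge> D 0 b"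
      proof -
        have "tayl D (Suc N) y b = D 0 b + (\<Sum>m<N. D (Suc m) b * (y - b)^Suc m / fact (Suc m))"
          unfolding tayl_def sum.lessThan_Suc_shift by simp
        moreover have "(\<Sum>m<N. D (Suc m) b * (y - b)^Suc m / fact (Suc m)) \<ge> 0"
        proof (rule sum_nonneg)
          fix m
          have "D (Suc m) b * (y - b)^Suc m / fact (Suc m) = ((-1)^Suc m * D (Suc m) b) * (b - y)^Suc m / fact (Suc m)"
            by (subst neg_pow[of y b]) (simp only: mult_ac)
          also have "\<dots> \<ge> 0" using sgn[of "Suc m" b] x y by (intro divide_nonneg_pos[OF mult_nonneg_nonneg]) auto
          finally show "D (Suc m) b * (y - b)^Suc m / fact (Suc m) \<ge> 0" .
        qed
        ultimately show ?thesis by simp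
      qed
      ultimately show "tayl D (Suc N) y x - tayl D (Suc N) y b \<le> D 0 y - D 0 b" by simp
    qed (use q in simp)
    finally show ?thesis .
  qed
  have "(\<lambda>N. q^N * (D 0 y - D 0 b)) \<longlonglongrightarrow> 0"
    using q by (intro tendsto_mult_left_zero LIMSEQ_power_zero) auto
  then have "R \<longlonglongrightarrow> 0"
    using R_nonneg R_le
    by (intro tendsto_sandwich[of "\<lambda>_. 0" R sequentially "\<lambda>N. q^N * (D 0 y - D 0 b)" 0]) auto
  then have "(\<lambda>N. D 0 x - R N) \<longlonglongrightarrow> D 0 x - 0" by (intro tendsto_diff tendsto_const)
  then have "(\<lambda>N. tayl D (Suc N) x b) \<longlonglongrightarrow> D 0 x" by (simp add: R_def)
  then have "(\<lambda>N. tayl D N x b) \<longlonglongrightarrow> D 0 x" by (rule LIMSEQ_imp_Suc)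
  then show ?thesis by (simp add: sums_def tayl_def)
qed


lemma deriv_scaled_lim:
  fixes g :: "real \<Rightarrow> real"
  assumes g0: "g 0 = 0" and dg: "(g has_real_derivative L) (at 0)"
  shows "(\<lambda>j. real (Suc j) * g (inverse (real (Suc j)))) \<longlonglongrightarrow> L"
proof -
  have G: "((\<lambda>h. g h / h) \<longlongrightarrow> L) (at 0)"
    using dg g0 unfolding DERIV_def by simp
  have H: "filterlim (\<lambda>j. inverse (real (Suc j))) (at 0) sequentially"
    unfolding filterlim_at using LIMSEQ_inverse_real_of_nat by simp
  have "(\<lambda>j. g (inverse (real (Suc j))) / inverse (real (Suc j))) \<longlonglongrightarrow> L"
    by (rule filterlim_compose[OF G H])
  then show ?thesis by (simp add: divide_inverse mult.commute)
qed

locale psi_hyp =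
  fixes \<psi> :: "real \<Rightarrow> real"
  assumes pos: "\<forall>t\<ge>0. \<psi> t > 0"
    and cont: "continuous_on {0..} \<psi>"
    and diff: "\<forall>t>0. \<psi> differentiable (at t)"
    and cm: "completely_monotone (deriv \<psi>)"
begin

definition P :: "nat \<Rightarrow> real \<Rightarrow> real" where "P m = (deriv ^^ m) \<psi>"

lemma P_Suc: "P (Suc m) = (deriv ^^ m) (deriv \<psi>)"
  unfolding P_def funpow_Suc_right by simp

lemma P_der: assumes "t > 0" shows "(P m has_real_derivative P (Suc m) t) (at t)"
proof (cases m)
  case 0
  then show ?thesis using diff assms DERIV_deriv_iff_real_differentiable
    by (simp add: P_def)
next
  case (Suc m')
  have "(deriv ^^ m') (deriv \<psi>) differentiable (at t)"
    using cm assms unfolding completely_monotone_def by blast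
  then have d: "((deriv ^^ m') (deriv \<psi>) has_real_derivative deriv ((deriv ^^ m') (deriv \<psi>)) t) (at t)"
    using DERIV_deriv_iff_real_differentiable by blast
  have e: "deriv ((deriv ^^ m') (deriv \<psi>)) = P (Suc (Suc m'))"
    unfolding P_Suc by simp
  show ?thesis using d unfolding e Suc P_Suc[of m'] .
qed

lemma P_sgn: assumes "m \<ge> 1" "t > 0" shows "(-1)^m * P m t \<le> 0"
proof -
  obtain m' where m: "m = Suc m'" using assms(1) by (cases m) auto
  have "(-1)^m' * (deriv ^^ m') (deriv \<psi>) t \<ge> 0"
    using cm assms(2) unfolding completely_monotone_def by blast
  then show ?thesis unfolding m P_Suc by simp
qed

lemma psi_rep: assumes "0 < v" "v < b"
  shows "(\<lambda>m. P m b * (v - b)^m / fact m) sums \<psi> v"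
proof -
  have "(\<lambda>m. (\<lambda>m t. - P m t) m b * (v - b)^m / fact m) sums (\<lambda>m t. - P m t) 0 v"
  proof (rule bern_little[OF _ _ assms])
    fix m :: nat and t :: real assume "t > 0"
    then show "((\<lambda>t. - P m t) has_real_derivative - P (Suc m) t) (at t)"
      by (intro DERIV_minus P_der)
  next
    fix m :: nat and t :: real assume "m \<ge> 1" "t > 0"
    then show "(-1)^m * - P m t \<ge> 0" using P_sgn by simp
  qed
  then have "(\<lambda>m. - (P m b * (v - b)^m / fact m)) sums (- P 0 v)"
    by simp
  from sums_minus[OF this] show ?thesis by (simp add: P_def)
qed

end


context psi_hyp begin

lemma time_apx_b:
  assumes c: "0 \<le> c" and b: "0 < b"
  shows "apx n (\<lambda>k h. exp (- c * \<psi> (b * (1 - exp (- (((t k - t h)^2) + 1/b) / b)))))"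
proof -
  define Z where "Z k h = exp (- (((t k - t h)^2) + 1/b) / b)" for k h
  have Z01: "0 < Z k h" "Z k h < 1" for k h
  proof -
    show "0 < Z k h" by (simp add: Z_def)
    have "((t k - t h)^2 + 1/b) / b > 0" using b by (intro divide_pos_pos add_nonneg_pos) auto
    then have "- (((t k - t h)^2) + 1/b) / b < 0" by (simp only: minus_divide_left neg_less_0_iff_less)
    then show "Z k h < 1" unfolding Z_def by simp
  qed
  define \<alpha> where "\<alpha> m = P m b * (-b)^m / fact m" for m
  have ser: "(\<lambda>m. \<alpha> m * Z k h ^ m) sums \<psi> (b * (1 - Z k h))" for k h
  proof -
    have "0 < b * (1 - Z k h)" "b * (1 - Z k h) < b" using Z01[of k h] b by auto
    from psi_rep[OF this] have "(\<lambda>m. P m b * (b * (1 - Z k h) - b)^m / fact m) sums \<psi> (b * (1 - Z k h))" .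
    moreover have "P m b * (b * (1 - Z k h) - b)^m / fact m = \<alpha> m * Z k h ^ m" for m
    proof -
      have "b * (1 - Z k h) - b = (-b) * Z k h" by (simp add: algebra_simps)
      then have "(b * (1 - Z k h) - b)^m = (-b)^m * Z k h ^ m" by (simp only: power_mult_distrib)
      then show ?thesis by (simp add: \<alpha>_def)
    qed
    ultimately show ?thesis by simp
  qed
  have \<alpha>0: "\<alpha> 0 = \<psi> b" by (simp add: \<alpha>_def P_def)
  define w where "w m = - c * \<alpha> (Suc m)" for m
  have w_nonneg: "w m \<ge> 0" for m
  proof -
    have "\<alpha> (Suc m) = ((-1)^Suc m * P (Suc m) b) * b^Suc m / fact (Suc m)"
      unfolding \<alpha>_def by (simp add: power_minus[of b "Suc m"] del: power_Suc)
    also have "\<dots> \<le> 0" using P_sgn[of "Suc m" b] b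
      by (intro divide_nonpos_pos[OF mult_nonpos_nonneg]) auto
    finally show ?thesis using c by (simp add: w_def mult_nonneg_nonpos)
  qed
  have ser3: "(\<lambda>m. w m * Z k h ^ Suc m) sums (- c * (\<psi> (b * (1 - Z k h)) - \<psi> b))" for k h
  proof -
    have "(\<lambda>m. \<alpha> (Suc m) * Z k h ^ Suc m) sums (\<psi> (b * (1 - Z k h)) - \<psi> b)"
      using ser[of k h] \<alpha>0 by (subst sums_Suc_iff) simp
    from sums_mult[OF this, of "- c"] show ?thesis by (simp add: w_def mult.assoc)
  qed
  have term_apx: "apx n (\<lambda>k h. w m * Z k h ^ Suc m)" for m
  proof -
    have "apx n (\<lambda>k h. (w m * exp (- real (Suc m) / b^2)) * exp (- (real (Suc m) / b) * (t k - t h)^2))"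
      using w_nonneg[of m] b by (intro apx_scale apx_gauss) auto
    then show ?thesis
    proof (rule apx_cong)
      fix k h
      have "Z k h ^ Suc m = exp (real (Suc m) * (- (((t k - t h)^2) + 1/b) / b))"
        unfolding Z_def by (rule exp_of_nat_mult[symmetric])
      also have "real (Suc m) * (- (((t k - t h)^2) + 1/b) / b)
          = - real (Suc m) / b^2 + - (real (Suc m) / b) * (t k - t h)^2"
        using b by (simp add: field_simps power2_eq_square)
      finally show "w m * exp (- real (Suc m) / b^2) * exp (- (real (Suc m) / b) * (t k - t h)^2)
          = w m * Z k h ^ Suc m"
        by (simp only: exp_add mult.assoc)
    qed
  qed
  have "apx n (\<lambda>k h. \<Sum>m. w m * Z k h ^ Suc m)"
    using term_apx ser3 sums_summable by (intro apx_suminf) blast+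
  then have "apx n (\<lambda>k h. exp (- c * \<psi> b) * exp (\<Sum>m. w m * Z k h ^ Suc m))"
    by (intro apx_scale apx_exp) auto
  then show ?thesis
  proof (rule apx_cong)
    fix k h
    have "(\<Sum>m. w m * Z k h ^ Suc m) = - c * (\<psi> (b * (1 - Z k h)) - \<psi> b)"
      using ser3[of k h] by (simp add: sums_iff)
    then have "- c * \<psi> b + (\<Sum>m. w m * Z k h ^ Suc m) = - c * \<psi> (b * (1 - Z k h))"
      by (simp add: algebra_simps)
    then show "exp (- c * \<psi> b) * exp (\<Sum>m. w m * Z k h ^ Suc m)
        = exp (- c * \<psi> (b * (1 - exp (- (((t k - t h)^2) + 1/b) / b))))"
      by (simp add: exp_add[symmetric] Z_def)
  qed
qed

lemma vlim:
  fixes U :: real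
  shows "(\<lambda>j. real (Suc j) * (1 - exp (- (U + 1 / real (Suc j)) / real (Suc j)))) \<longlonglongrightarrow> U"
proof -
  define g where "g h = 1 - exp (- (U + h) * h)" for h :: real
  have "(g has_real_derivative U) (at 0)"
    unfolding g_def[abs_def] by (auto intro!: derivative_eq_intros)
  from deriv_scaled_lim[of g, OF _ this] have "(\<lambda>j. real (Suc j) * g (inverse (real (Suc j)))) \<longlonglongrightarrow> U"
    by (simp add: g_def)
  moreover have "g (inverse (real (Suc j))) = 1 - exp (- (U + 1 / real (Suc j)) / real (Suc j))" for j
    by (simp add: g_def divide_inverse)
  ultimately show ?thesis by simp
qed

lemma time_apx:
  assumes c: "0 \<le> c"
  shows "apx n (\<lambda>k h. exp (- c * \<psi> ((t k - t h)^2)))"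
proof (rule apx_lim[of sequentially n
    "\<lambda>j k h. exp (- c * \<psi> (real (Suc j) * (1 - exp (- (((t k - t h)^2) + 1 / real (Suc j)) / real (Suc j)))))"])
  show "\<forall>\<^sub>F j in sequentially. apx n (\<lambda>k h. exp (- c * \<psi> (real (Suc j) * (1 - exp (- (((t k - t h)^2) + 1 / real (Suc j)) / real (Suc j))))))"
    using c by (intro always_eventually allI time_apx_b) auto
  fix k h
  define U where "U = (t k - t h)^2"
  have U: "U \<ge> 0" by (simp add: U_def)
  have "(\<lambda>j. \<psi> (real (Suc j) * (1 - exp (- (U + 1 / real (Suc j)) / real (Suc j))))) \<longlonglongrightarrow> \<psi> U"
  proof (rule continuous_on_tendsto_compose[OF cont vlim])
    show "U \<in> {0..}" using U by simp
    show "\<forall>\<^sub>F j in sequentially. real (Suc j) * (1 - exp (- (U + 1 / real (Suc j)) / real (Suc j))) \<in> {0..}"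
    proof (intro always_eventually allI)
      fix j
      have "(U + 1 / real (Suc j)) / real (Suc j) \<ge> 0" using U by simp
      then have "exp (- (U + 1 / real (Suc j)) / real (Suc j)) \<le> 1"
        by (simp only: minus_divide_left exp_le_one_iff neg_le_0_iff_le)
      then show "real (Suc j) * (1 - exp (- (U + 1 / real (Suc j)) / real (Suc j))) \<in> {0..}" by simp
    qed
  qed
  then show "(\<lambda>j. exp (- c * \<psi> (real (Suc j) * (1 - exp (- (((t k - t h)^2) + 1 / real (Suc j)) / real (Suc j))))))
      \<longlonglongrightarrow> exp (- c * \<psi> ((t k - t h)^2))"
    unfolding U_def by (intro tendsto_intros)
qed simp

end


context psi_hyp begin

lemma inv_apx:
  assumes sph: "\<forall>k<n. s k \<in> sphere_pts d" and xi: "\<xi> > 0"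
  shows "apx n (\<lambda>k h. 1 / (gc_dist d (s k) (s h) + \<xi> * \<psi> ((t k - t h)^2)))"
proof -
  define X where "X k h = gc_dist d (s k) (s h) + \<xi> * \<psi> ((t k - t h)^2)" for k h
  have Xpos: "X k h > 0" if "k < n" "h < n" for k h
  proof -
    have "\<bar>inner_d d (s k) (s h)\<bar> \<le> 1" using inner_d_bound sph that by blast
    then have "gc_dist d (s k) (s h) \<ge> 0"
      unfolding gc_dist_def inner_d_def[symmetric] by (intro arccos_lbound) (auto simp: abs_le_iff)
    moreover have "\<psi> ((t k - t h)^2) > 0" using pos by simp
    ultimately show ?thesis using xi by (simp add: X_def add_nonneg_pos)
  qed
  define M where "M j k h = (\<Sum>i. (1 / real (Suc j)) *
      (exp (- (real (Suc i) / real (Suc j)) * gc_dist d (s k) (s h)) *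
       exp (- (real (Suc i) * \<xi> / real (Suc j)) * \<psi> ((t k - t h)^2))))" for j k h
  have term_eq: "exp (- (real (Suc i) / real (Suc j)) * gc_dist d (s k) (s h)) *
       exp (- (real (Suc i) * \<xi> / real (Suc j)) * \<psi> ((t k - t h)^2))
     = exp (- X k h / real (Suc j)) ^ Suc i" for i j k h
  proof -
    have "exp (- X k h / real (Suc j)) ^ Suc i = exp (real (Suc i) * (- X k h / real (Suc j)))"
      by (rule exp_of_nat_mult[symmetric])
    also have "real (Suc i) * (- X k h / real (Suc j)) = - (real (Suc i) / real (Suc j)) * gc_dist d (s k) (s h)
        + - (real (Suc i) * \<xi> / real (Suc j)) * \<psi> ((t k - t h)^2)"
      unfolding X_def by (simp add: divide_inverse algebra_simps)
    finally show ?thesis by (simp only: exp_add)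
  qed
  have geo: "(\<lambda>i. exp (- X k h / real (Suc j)) ^ Suc i) sums
      (1 / (1 - exp (- X k h / real (Suc j))) - 1)" if "k < n" "h < n" for k h j
  proof -
    have "- X k h / real (Suc j) < 0" using Xpos[OF that] by (simp add: divide_pos_pos)
    then have "norm (exp (- X k h / real (Suc j))) < 1" by simp
    from geometric_sums[OF this] show ?thesis
      by (subst sums_Suc_iff) simp
  qed
  show ?thesis
  proof (rule apx_lim[of sequentially n M])
    show "\<forall>\<^sub>F j in sequentially. apx n (M j)"
    proof (intro always_eventually allI)
      fix j
      show "apx n (M j)" unfolding M_def
      proof (rule apx_suminf)
        fix i
        show "apx n (\<lambda>k h. 1 / real (Suc j) *
          (exp (- (real (Suc i) / real (Suc j)) * gc_dist d (s k) (s h)) *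
           exp (- (real (Suc i) * \<xi> / real (Suc j)) * \<psi> ((t k - t h)^2))))"
          using xi by (intro apx_scale apx_mult apx_sphere[OF sph] time_apx) auto
      next
        fix k h assume "k < n" "h < n"
        then show "summable (\<lambda>i. 1 / real (Suc j) *
          (exp (- (real (Suc i) / real (Suc j)) * gc_dist d (s k) (s h)) *
           exp (- (real (Suc i) * \<xi> / real (Suc j)) * \<psi> ((t k - t h)^2))))"
          unfolding term_eq using geo sums_summable summable_mult by blast
      qed
    qed
  next
    fix k h assume kh: "k < n" "h < n"
    define g where "g hh = exp (X k h * hh) - 1" for hh :: real
    have "(g has_real_derivative X k h) (at 0)"
      unfolding g_def[abs_def] by (auto intro!: derivative_eq_intros)
    from deriv_scaled_lim[of g, OF _ this]
    have "(\<lambda>j. real (Suc j) * g (inverse (real (Suc j)))) \<longlonglongrightarrow> X k h" by (simp add: g_def)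
    then have lim: "(\<lambda>j. inverse (real (Suc j) * g (inverse (real (Suc j))))) \<longlonglongrightarrow> inverse (X k h)"
      using Xpos[OF kh] by (intro tendsto_inverse) auto
    have "M j k h = inverse (real (Suc j) * g (inverse (real (Suc j))))" for j
    proof -
      have sm: "(\<lambda>i. 1 / real (Suc j) * exp (- X k h / real (Suc j)) ^ Suc i) sums
          (1 / real (Suc j) * (1 / (1 - exp (- X k h / real (Suc j))) - 1))"
        by (rule sums_mult[OF geo[OF kh]])
      have "M j k h = (\<Sum>i. 1 / real (Suc j) * exp (- X k h / real (Suc j)) ^ Suc i)"
        unfolding M_def term_eq by (rule refl)
      also have "\<dots> = 1 / real (Suc j) * (1 / (1 - exp (- X k h / real (Suc j))) - 1)"
        using sm by (rule sums_unique[symmetric])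
      also have "\<dots> = inverse (real (Suc j) * g (inverse (real (Suc j))))"
      proof -
        define e where "e = exp (X k h / real (Suc j))"
        have e1: "e > 1" using Xpos[OF kh] by (simp add: e_def)
        have em: "exp (- X k h / real (Suc j)) = inverse e"
          by (simp add: e_def exp_minus[symmetric])
        have ge: "g (inverse (real (Suc j))) = e - 1" by (simp add: g_def e_def divide_inverse)
        show ?thesis unfolding em ge using e1 by (simp add: field_simps)
      qed
      finally show ?thesis .
    qed
    then show "(\<lambda>j. M j k h) \<longlonglongrightarrow> 1 / (gc_dist d (s k) (s h) + \<xi> * \<psi> ((t k - t h)^2))"
      using lim by (simp add: X_def divide_inverse)
  qed simp
qed

end


theorem theorem2:
  fixes \<sigma>2 :: real and \<phi> \<psi> :: "real \<Rightarrow> real" and C :: "real \<Rightarrow> real \<Rightarrow> real"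
  assumes "\<sigma>2 > 0"
    and "stieltjes_fun \<phi>" and "\<phi> 0 = 1"
    and "\<forall>t\<ge>0. \<psi> t > 0"
    and "continuous_on {0..} \<psi>"
    and "\<forall>t>0. \<psi> differentiable (at t)"
    and "completely_monotone (deriv \<psi>)"
    and "\<forall>\<theta> u. C \<theta> u = \<sigma>2 / \<psi> (u\<^sup>2) * \<phi> (\<theta> / \<psi> (u\<^sup>2))"
  shows "\<forall>d\<ge>1. covariance_sphere_time d C"
proof (intro allI impI)
  fix d :: nat assume "d \<ge> 1"
  interpret psi_hyp \<psi> using assms(4-7) by unfold_locales
  from assms(2) obtain M :: "real measure" where Msets: "sets M = sets borel"
    and M0: "emeasure M {..0} = 0"
    and Mint: "\<forall>t\<ge>0. integrable M (\<lambda>\<xi>. 1 / (t + \<xi>)) \<and> \<phi> t = (\<integral>\<xi>. 1 / (t + \<xi>) \<partial>M)"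
    unfolding stieltjes_fun_def by blast
  show "covariance_sphere_time d C" unfolding covariance_sphere_time_def
  proof (intro allI impI)
    fix n :: nat and s :: "nat \<Rightarrow> nat \<Rightarrow> real" and t :: "nat \<Rightarrow> real" and a :: "nat \<Rightarrow> real"
    assume sph: "\<forall>k<n. s k \<in> sphere_pts d"
    define F where "F k h \<xi> = \<sigma>2 / (gc_dist d (s k) (s h) + \<xi> * \<psi> ((t k - t h)^2))" for k h \<xi>
    have CF: "integrable M (F k h) \<and> C (gc_dist d (s k) (s h)) (t k - t h) = (\<integral>\<xi>. F k h \<xi> \<partial>M)"
      if kh: "k < n" "h < n" for k h
    proof -
      define p where "p = \<psi> ((t k - t h)^2)"
      define \<theta> where "\<theta> = gc_dist d (s k) (s h)"
      have p: "p > 0" using pos by (simp add: p_def)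
      have "\<bar>inner_d d (s k) (s h)\<bar> \<le> 1" using inner_d_bound sph kh by blast
      then have th: "\<theta> \<ge> 0"
        unfolding \<theta>_def gc_dist_def inner_d_def[symmetric] by (intro arccos_lbound) (auto simp: abs_le_iff)
      have tau: "\<theta> / p \<ge> 0" using th p by simp
      have Fe: "F k h \<xi> = \<sigma>2 / p * (1 / (\<theta> / p + \<xi>))" for \<xi>
      proof -
        have "\<theta> / p + \<xi> = (\<theta> + \<xi> * p) / p" using p by (simp add: field_simps)
        then show ?thesis using p by (simp add: F_def p_def[symmetric] \<theta>_def[symmetric])
      qed
      have int: "integrable M (\<lambda>\<xi>. 1 / (\<theta> / p + \<xi>))" using Mint tau by blast
      have intF: "integrable M (F k h)" unfolding Fe[abs_def] by (rule integrable_mult_right[OF int])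
      have Ceq: "C \<theta> (t k - t h) = \<sigma>2 / p * \<phi> (\<theta> / p)"
        using assms(8) by (simp add: p_def)
      have phieq: "\<phi> (\<theta> / p) = (\<integral>\<xi>. 1 / (\<theta> / p + \<xi>) \<partial>M)" using Mint tau by blast
      have e1: "(\<integral>\<xi>. F k h \<xi> \<partial>M) = \<sigma>2 / p * (\<integral>\<xi>. 1 / (\<theta> / p + \<xi>) \<partial>M)"
        unfolding Fe by (rule integral_mult_right_zero)
      have "C \<theta> (t k - t h) = (\<integral>\<xi>. F k h \<xi> \<partial>M)"
        by (rule trans[OF Ceq[unfolded phieq] e1[symmetric]])
      with intF show ?thesis unfolding \<theta>_def by simp
    qed
    have "(\<Sum>k<n. \<Sum>h<n. a k * a h * C (gc_dist d (s k) (s h)) (t k - t h))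
        = (\<Sum>k<n. \<Sum>h<n. (\<integral>\<xi>. a k * a h * F k h \<xi> \<partial>M))"
      using CF by (intro sum.cong refl) simp
    also have "\<dots> = (\<integral>\<xi>. (\<Sum>k<n. \<Sum>h<n. a k * a h * F k h \<xi>) \<partial>M)"
    proof -
      have "(\<integral>\<xi>. (\<Sum>k<n. \<Sum>h<n. a k * a h * F k h \<xi>) \<partial>M)
          = (\<Sum>k<n. (\<integral>\<xi>. (\<Sum>h<n. a k * a h * F k h \<xi>) \<partial>M))"
        using CF by (intro Bochner_Integration.integral_sum integrable_sum integrable_mult_right) auto
      also have "\<dots> = (\<Sum>k<n. \<Sum>h<n. (\<integral>\<xi>. a k * a h * F k h \<xi> \<partial>M))"
        using CF by (intro sum.cong refl Bochner_Integration.integral_sum integrable_mult_right) auto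
      finally show ?thesis by simp
    qed
    also have "\<dots> \<ge> 0"
    proof (rule integral_nonneg_AE)
      have null: "{..0::real} \<in> null_sets M"
        using M0 Msets by (intro null_setsI) auto
      have pw: "0 \<le> (\<Sum>k<n. \<Sum>h<n. a k * a h * F k h \<xi>)" if xi: "\<xi> > 0" for \<xi>
      proof -
        have "(\<Sum>k<n. \<Sum>h<n. a k * a h * (1 / (gc_dist d (s k) (s h) + \<xi> * \<psi> ((t k - t h)^2)))) \<ge> 0"
          by (rule apx_psd[OF inv_apx[OF sph xi]])
        then have "\<sigma>2 * (\<Sum>k<n. \<Sum>h<n. a k * a h * (1 / (gc_dist d (s k) (s h) + \<xi> * \<psi> ((t k - t h)^2)))) \<ge> 0"
          using assms(1) by simp
        also have "\<sigma>2 * (\<Sum>k<n. \<Sum>h<n. a k * a h * (1 / (gc_dist d (s k) (s h) + \<xi> * \<psi> ((t k - t h)^2))))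
            = (\<Sum>k<n. \<Sum>h<n. a k * a h * F k h \<xi>)"
          by (simp add: F_def sum_distrib_left algebra_simps)
        finally show ?thesis .
      qed
      show "AE \<xi> in M. 0 \<le> (\<Sum>k<n. \<Sum>h<n. a k * a h * F k h \<xi>)"
      proof (rule AE_I'[OF null], rule subsetI)
        fix \<xi> assume "\<xi> \<in> {\<xi> \<in> space M. \<not> 0 \<le> (\<Sum>k<n. \<Sum>h<n. a k * a h * F k h \<xi>)}"
        then have "\<not> 0 \<le> (\<Sum>k<n. \<Sum>h<n. a k * a h * F k h \<xi>)" by blast
        then have "\<not> \<xi> > 0" using pw by blast
        then show "\<xi> \<in> {..0}" by simp
      qed
    qed
    finally show "(\<Sum>k<n. \<Sum>h<n. a k * a h * C (gc_dist d (s k) (s h)) (t k - t h)) \<ge> 0" .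
  qed
qed

end
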